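(* Let $R$ be a commutative domain, $B=R(t,\sigma,H,J)$, $M$ an $R$-weight $B$-module, and $\mathfrak m\in\operatorname{Maxspec}(R)$ with $\sigma(\mathfrak m)\notin\mathcal S(B)$. Then: (1) for all $j\in J\setminus\sigma(\mathfrak m)$ and $h\in H\setminus\sigma(\mathfrak m)$, the $R/\mathfrak m$-linear maps $M_{\mathfrak m}\to M_{\sigma(\mathfrak m)}$, $v\mapsto (jt)v$, and $M_{\sigma(\mathfrak m)}\to M_{\mathfrak m}$, $v\mapsto(\sigma^{-1}(h)t^{-1})v$, are injective; (2) $\dim_{R/\mathfrak m}M_{\mathfrak m}=\dim_{R/\sigma(\mathfrak m)}M_{\sigma(\mathfrak m)}$.
   Context: $\Bbbk$ is a field; all algebras are associative unital $\Bbbk$-algebras. For an algebra $R$ and $\sigma\in\operatorname{Aut}_\Bbbk(R)$, $R[t,t^{-1};\sigma]$ is the skew Laurent ring: generated over $R$ by $t,t^{-1}$ with $tt^{-1}=t^{-1}t=1$ and $t^{\pm1}r=\sigma^{\pm1}(r)t^{\pm1}$ for $r\in R$. Given two-sided ideals $H,J$ of $R$, set $I^{(0)}=R$, $I^{(n)}=J\sigma(J)\cdots\sigma^{n-1}(J)$ for $n\ge1$, and $I^{(n)}=\sigma^{-1}(H)\sigma^{-2}(H)\cdots\sigma^{n}(H)$ for $n\le-1$; it is assumed throughout that $I^{(n)}\neq0$ for all $n\in\mathbb Z$. The Bell–Rogalski (BR) algebra is $R(t,\sigma,H,J)=\bigoplus_{n\in\mathbb Z}I^{(n)}t^n\subseteq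 R[t,t^{-1};\sigma]$; write $B_n=I^{(n)}t^n$. For $R$ commutative, $\mathcal S(B)=\{\mathfrak p\in\operatorname{Spec}(R):\mathfrak p\supseteq HJ\}$. For $R$ a commutative domain, a left $B$-module $M$ is an $R$-weight module if $M=\bigoplus_{\mathfrak m\in\operatorname{Maxspec}(R)}M_{\mathfrak m}$ where $M_{\mathfrak m}=\{v\in M:\mathfrak m v=0\}$ and $\dim_{R/\mathfrak m}M_{\mathfrak m}<\infty$ for all $\mathfrak m$. Note $B_k M_{\mathfrak m}\subseteq M_{\sigma^k(\mathfrak m)}$; $M_{\sigma(\mathfrak m)}$ is regarded as an $R/\mathfrak m$-vector space via the field isomorphism $R/\mathfrak m\to R/\sigma(\mathfrak m)$ induced by $\sigma$. *)

theory Defs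
  imports Main
begin

definition is_ideal :: "('r::idom) set \<Rightarrow> bool" where
  "is_ideal I \<longleftrightarrow> 0 \<in> I \<and> (\<forall>a\<in>I. \<forall>b\<in>I. a + b \<in> I) \<and> (\<forall>r. \<forall>a\<in>I. r * a \<in> I)"

definition is_prime_ideal :: "('r::idom) set \<Rightarrow> bool" where
  "is_prime_ideal P \<longleftrightarrow> is_ideal P \<and> P \<noteq> UNIV \<and> (\<forall>a b. a * b \<in> P \<longrightarrow> a \<in> P \<or> b \<in> P)"

definition is_max_ideal :: "('r::idom) set \<Rightarrow> bool" where
  "is_max_ideal P \<longleftrightarrow> is_ideal P \<and> P \<noteq> UNIV \<and>
     (\<forall>I. is_ideal I \<and> P \<subseteq> I \<longrightarrow> I = P \<or> I = UNIV)"

definition ideal_prod :: "('r::idom) set \<Rightarrow> 'r set \<Rightarrow> 'r set" where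
  "ideal_prod A B = {(\<Sum>i<(k::nat). a i * b i) | k a b. \<forall>i<k. a i \<in> A \<and> b i \<in> B}"

definition is_ring_aut :: "('r::idom \<Rightarrow> 'r) \<Rightarrow> bool" where
  "is_ring_aut \<sigma> \<longleftrightarrow> bij \<sigma> \<and> (\<forall>a b. \<sigma> (a + b) = \<sigma> a + \<sigma> b) \<and>
     (\<forall>a b. \<sigma> (a * b) = \<sigma> a * \<sigma> b) \<and> \<sigma> 1 = 1"

definition spow :: "('r \<Rightarrow> 'r) \<Rightarrow> int \<Rightarrow> 'r \<Rightarrow> 'r" where
  "spow \<sigma> k = (if 0 \<le> k then \<sigma> ^^ nat k else (inv \<sigma>) ^^ nat (- k))"

text \<open>An element \<open>\<Sum> f n t^n\<close> is represented by its finitely supported coefficient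
  function \<open>f :: int \<Rightarrow> 'r\<close>; multiplication uses \<open>t^k r = \<sigma>^k(r) t^k\<close>.\<close>

definition skew_mult :: "('r::idom \<Rightarrow> 'r) \<Rightarrow> (int \<Rightarrow> 'r) \<Rightarrow> (int \<Rightarrow> 'r) \<Rightarrow> int \<Rightarrow> 'r" where
  "skew_mult \<sigma> f g n = (\<Sum>k\<in>{k. f k \<noteq> 0}. f k * spow \<sigma> k (g (n - k)))"

definition tmono :: "'r::zero \<Rightarrow> int \<Rightarrow> int \<Rightarrow> 'r" where
  "tmono a n = (\<lambda>k. if k = n then a else 0)"

fun Ipos :: "('r::idom \<Rightarrow> 'r) \<Rightarrow> 'r set \<Rightarrow> nat \<Rightarrow> 'r set" where
  "Ipos \<sigma> J 0 = UNIV"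
| "Ipos \<sigma> J (Suc n) = (if n = 0 then J else ideal_prod (Ipos \<sigma> J n) ((\<sigma> ^^ n) ` J))"

fun Ineg :: "('r::idom \<Rightarrow> 'r) \<Rightarrow> 'r set \<Rightarrow> nat \<Rightarrow> 'r set" where
  "Ineg \<sigma> H 0 = UNIV"
| "Ineg \<sigma> H (Suc n) = (if n = 0 then inv \<sigma> ` H
     else ideal_prod (Ineg \<sigma> H n) ((inv \<sigma> ^^ Suc n) ` H))"

text \<open>\<open>I^(n)\<close>: \<open>R\<close> for \<open>n=0\<close>, \<open>J \<sigma>(J)\<cdots>\<sigma>^(n-1)(J)\<close> for \<open>n\<ge>1\<close>,
  \<open>\<sigma>^-1(H)\<cdots>\<sigma>^n(H)\<close> for \<open>n\<le>-1\<close>.\<close>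
definition Iseq :: "('r::idom \<Rightarrow> 'r) \<Rightarrow> 'r set \<Rightarrow> 'r set \<Rightarrow> int \<Rightarrow> 'r set" where
  "Iseq \<sigma> H J n = (if 0 \<le> n then Ipos \<sigma> J (nat n) else Ineg \<sigma> H (nat (- n)))"

definition BR_alg :: "('r::idom \<Rightarrow> 'r) \<Rightarrow> 'r set \<Rightarrow> 'r set \<Rightarrow> (int \<Rightarrow> 'r) set" where
  "BR_alg \<sigma> H J = {f. finite {n. f n \<noteq> 0} \<and> (\<forall>n. f n \<in> Iseq \<sigma> H J n)}"

definition SB :: "('r::idom) set \<Rightarrow> 'r set \<Rightarrow> 'r set set" where
  "SB H J = {p. is_prime_ideal p \<and> ideal_prod H J \<subseteq> p}"

text \<open>\<open>act b v\<close> is the action of \<open>b \<in> B\<close> on \<open>v\<close>; only its values on \<open>B\<close> matter.\<close>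
definition is_B_module :: "('r::idom \<Rightarrow> 'r) \<Rightarrow> 'r set \<Rightarrow> 'r set \<Rightarrow>
    ((int \<Rightarrow> 'r) \<Rightarrow> 'm::ab_group_add \<Rightarrow> 'm) \<Rightarrow> bool" where
  "is_B_module \<sigma> H J act \<longleftrightarrow>
     (\<forall>f\<in>BR_alg \<sigma> H J. \<forall>g\<in>BR_alg \<sigma> H J. \<forall>v. act (\<lambda>n. f n + g n) v = act f v + act g v) \<and>
     (\<forall>f\<in>BR_alg \<sigma> H J. \<forall>v w. act f (v + w) = act f v + act f w) \<and>
     (\<forall>f\<in>BR_alg \<sigma> H J. \<forall>g\<in>BR_alg \<sigma> H J. \<forall>v. act (skew_mult \<sigma> f g) v = act f (act g v)) \<and>
     (\<forall>v. act (tmono 1 0) v = v)"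

definition ract :: "((int \<Rightarrow> 'r::idom) \<Rightarrow> 'm \<Rightarrow> 'm) \<Rightarrow> 'r \<Rightarrow> 'm \<Rightarrow> 'm" where
  "ract act r v = act (tmono r 0) v"

definition wspace :: "((int \<Rightarrow> 'r::idom) \<Rightarrow> 'm::ab_group_add \<Rightarrow> 'm) \<Rightarrow> 'r set \<Rightarrow> 'm set" where
  "wspace act P = {v. \<forall>r\<in>P. ract act r v = 0}"

text \<open>The \<open>R/m\<close>-structure on \<open>V \<subseteq> M_m\<close> is induced by the \<open>R\<close>-action; a finite
  \<open>S\<close> is \<open>R/m\<close>-linearly independent iff every \<open>R\<close>-relation has all coefficients in \<open>m\<close>.\<close>
definition res_indep :: "((int \<Rightarrow> 'r::idom) \<Rightarrow> 'm::ab_group_add \<Rightarrow> 'm) \<Rightarrow> 'r set \<Rightarrow> 'm set \<Rightarrow> bool" where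
  "res_indep act P S \<longleftrightarrow> (\<forall>c. (\<Sum>s\<in>S. ract act (c s) s) = 0 \<longrightarrow> (\<forall>s\<in>S. c s \<in> P))"

definition res_span :: "((int \<Rightarrow> 'r::idom) \<Rightarrow> 'm::ab_group_add \<Rightarrow> 'm) \<Rightarrow> 'm set \<Rightarrow> 'm set" where
  "res_span act S = {(\<Sum>s\<in>S. ract act (c s) s) | c. True}"

definition res_basis :: "((int \<Rightarrow> 'r::idom) \<Rightarrow> 'm::ab_group_add \<Rightarrow> 'm) \<Rightarrow> 'r set \<Rightarrow> 'm set \<Rightarrow> 'm set \<Rightarrow> bool" where
  "res_basis act P V S \<longleftrightarrow> finite S \<and> S \<subseteq> V \<and> res_indep act P S \<and> V \<subseteq> res_span act S"

definition res_fin_dim :: "((int \<Rightarrow> 'r::idom) \<Rightarrow> 'm::ab_group_add \<Rightarrow> 'm) \<Rightarrow> 'r set \<Rightarrow> 'm set \<Rightarrow> bool" where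
  "res_fin_dim act P V \<longleftrightarrow> (\<exists>S. res_basis act P V S)"

definition res_dim :: "((int \<Rightarrow> 'r::idom) \<Rightarrow> 'm::ab_group_add \<Rightarrow> 'm) \<Rightarrow> 'r set \<Rightarrow> 'm set \<Rightarrow> nat" where
  "res_dim act P V = card (SOME S. res_basis act P V S)"

definition is_weight_module :: "((int \<Rightarrow> 'r::idom) \<Rightarrow> 'm::ab_group_add \<Rightarrow> 'm) \<Rightarrow> bool" where
  "is_weight_module act \<longleftrightarrow>
     (\<forall>v. \<exists>F w. finite F \<and> (\<forall>P\<in>F. is_max_ideal P \<and> w P \<in> wspace act P) \<and> v = (\<Sum>P\<in>F. w P)) \<and>
     (\<forall>F w. finite F \<and> (\<forall>P\<in>F. is_max_ideal P \<and> w P \<in> wspace act P) \<and> (\<Sum>P\<in>F. w P) = 0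
        \<longrightarrow> (\<forall>P\<in>F. w P = 0)) \<and>
     (\<forall>P. is_max_ideal P \<longrightarrow> res_fin_dim act P (wspace act P))"

end

theory Submission
  imports Defs "HOL.Modules"
begin

lemma ideal_mult: "is_ideal I \<Longrightarrow> a \<in> I \<Longrightarrow> r * a \<in> I"
  by (simp add: is_ideal_def)
lemma ideal_mult2: "is_ideal I \<Longrightarrow> a \<in> I \<Longrightarrow> a * r \<in> I"
  by (metis ideal_mult mult.commute)
lemma ideal_add: "is_ideal I \<Longrightarrow> a \<in> I \<Longrightarrow> b \<in> I \<Longrightarrow> a + b \<in> I"
  by (simp add: is_ideal_def)
lemma ideal_zero: "is_ideal I \<Longrightarrow> 0 \<in> I"
  by (simp add: is_ideal_def)
lemma ideal_neg: "is_ideal I \<Longrightarrow> a \<in> I \<Longrightarrow> - a \<in> I"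
  by (metis ideal_mult mult_minus1)
lemma ideal_diff: "is_ideal I \<Longrightarrow> a \<in> I \<Longrightarrow> b \<in> I \<Longrightarrow> a - b \<in> I"
  by (metis ideal_add ideal_neg diff_conv_add_uminus)
lemma ideal_sum: "is_ideal I \<Longrightarrow> (\<forall>i\<in>A. f i \<in> I) \<Longrightarrow> sum f A \<in> I"
  by (induction A rule: infinite_finite_induct) (auto intro: ideal_add ideal_zero)
lemma ideal_one: "is_ideal I \<Longrightarrow> I \<noteq> UNIV \<Longrightarrow> 1 \<notin> I"
  by (metis UNIV_eq_I ideal_mult2 mult_1)

lemma max_inv:
  assumes P: "is_max_ideal P" and a: "a \<notin> P"
  shows "\<exists>b. b * a - 1 \<in> P"
proof -
  have iP: "is_ideal P" using P by (simp add: is_max_ideal_def)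
  define I where "I = {x + r * a | x r. x \<in> P}"
  have "is_ideal I" unfolding is_ideal_def I_def
  proof (intro conjI ballI allI)
    show "0 \<in> {x + r * a |x r. x \<in> P}" using ideal_zero[OF iP] by force
  next
    fix u v assume "u \<in> {x + r * a |x r. x \<in> P}" "v \<in> {x + r * a |x r. x \<in> P}"
    then obtain x r y s where "u = x + r * a" "v = y + s * a" "x \<in> P" "y \<in> P" by blast
    then show "u + v \<in> {x + r * a |x r. x \<in> P}"
      by (intro CollectI exI[of _ "x + y"] exI[of _ "r + s"]) (auto simp: algebra_simps intro: ideal_add[OF iP])
  next
    fix q u assume "u \<in> {x + r * a |x r. x \<in> P}"
    then obtain x r where "u = x + r * a" "x \<in> P" by blast
    then show "q * u \<in> {x + r * a |x r. x \<in> P}"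
      by (intro CollectI exI[of _ "q * x"] exI[of _ "q * r"]) (auto simp: algebra_simps intro: ideal_mult[OF iP])
  qed
  moreover have "P \<subseteq> I" unfolding I_def by force
  moreover have "a \<in> I" unfolding I_def using ideal_zero[OF iP] by force
  ultimately have "I = UNIV" using P a unfolding is_max_ideal_def by blast
  then have "1 \<in> I" by simp
  then obtain x r where "1 = x + r * a" "x \<in> P" unfolding I_def by blast
  then have "r * a - 1 = - x" by (simp add: algebra_simps)
  then show ?thesis using ideal_neg[OF iP \<open>x \<in> P\<close>] by metis
qed

lemma exch:
  fixes sm :: "'r::idom \<Rightarrow> 'm::ab_group_add \<Rightarrow> 'm"
  assumes md: "module sm" and P: "is_max_ideal P"
  shows "finite T \<Longrightarrow> T \<subseteq> {v. \<forall>r\<in>P. sm r v = 0} \<Longrightarrow> finite A \<Longrightarrow>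
    (\<forall>d. (\<Sum>a\<in>A. sm (d a) (x a)) = 0 \<longrightarrow> (\<forall>a\<in>A. d a \<in> P)) \<Longrightarrow>
    (\<forall>a\<in>A. \<exists>c. x a = (\<Sum>u\<in>T. sm (c u) u)) \<Longrightarrow> card A \<le> card T"
proof (induction T arbitrary: A x rule: finite_induct)
  case empty
  interpret module sm by (rule md)
  have iP: "is_ideal P" and nU: "P \<noteq> UNIV" using P by (auto simp: is_max_ideal_def)
  have "x a = 0" if "a \<in> A" for a using empty.prems(4) that by auto
  then have "(\<Sum>a\<in>A. sm 1 (x a)) = 0" by simp
  then have "\<forall>a\<in>A. 1 \<in> P" using empty.prems(3)[rule_format, of "\<lambda>_. 1"] by simp
  then have "A = {}" using ideal_one[OF iP nU] by blast
  then show ?case by simp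
  next
  case (insert t T)
  interpret module sm by (rule md)
  have iP: "is_ideal P" and nU: "P \<noteq> UNIV" using P by (auto simp: is_max_ideal_def)
  from insert.prems(4) obtain C where C: "\<forall>a\<in>A. x a = (\<Sum>u\<in>insert t T. sm (C a u) u)"
    by metis
  have tV: "\<And>r. r \<in> P \<Longrightarrow> sm r t = 0" using insert.prems(1) by auto
  have C2: "x a = sm (C a t) t + (\<Sum>u\<in>T. sm (C a u) u)" if "a \<in> A" for a
    using C that insert.hyps by simp
  show ?case
  proof (cases "\<forall>a\<in>A. C a t \<in> P")
    case True
    have "\<forall>a\<in>A. \<exists>c. x a = (\<Sum>u\<in>T. sm (c u) u)"
      using C2 True tV by auto
    then have "card A \<le> card T"
      using insert.IH[of A x] insert.prems insert.hyps by blast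
    then show ?thesis using insert.hyps by simp
  next
    case False
    then obtain a0 where a0: "a0 \<in> A" "C a0 t \<notin> P" by blast
    then obtain b where b: "b * C a0 t - 1 \<in> P" using max_inv[OF P] by blast
    define A' where "A' = A - {a0}"
    define y where "y a = x a - sm (C a t * b) (x a0)" for a
    have fA': "finite A'" using insert.prems(2) by (simp add: A'_def)
    have span: "\<forall>a\<in>A'. \<exists>c. y a = (\<Sum>u\<in>T. sm (c u) u)"
    proof
      fix a assume "a \<in> A'"
      then have aA: "a \<in> A" by (simp add: A'_def)
      have "C a t - C a t * b * C a0 t \<in> P"
      proof -
        have "C a t - C a t * b * C a0 t = - (C a t * (b * C a0 t - 1))" by (simp add: algebra_simps)
        then show ?thesis using ideal_neg[OF iP ideal_mult[OF iP b]] by metis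
      qed
      then have z: "sm (C a t - C a t * b * C a0 t) t = 0" using tV by blast
      have "y a = sm (C a t) t + (\<Sum>u\<in>T. sm (C a u) u)
          - sm (C a t * b) (sm (C a0 t) t + (\<Sum>u\<in>T. sm (C a0 u) u))"
        unfolding y_def using C2[OF aA] C2[OF a0(1)] by simp
      also have "\<dots> = sm (C a t - C a t * b * C a0 t) t + (\<Sum>u\<in>T. sm (C a u - C a t * b * C a0 u) u)"
        by (simp add: scale_right_distrib scale_left_diff_distrib scale_sum_right sum_subtractf algebra_simps)
      also have "\<dots> = (\<Sum>u\<in>T. sm (C a u - C a t * b * C a0 u) u)" using z by simp
      finally show "\<exists>c. y a = (\<Sum>u\<in>T. sm (c u) u)" by (intro exI[of _ "\<lambda>u. C a u - C a t * b * C a0 u"])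
    qed
    have ind: "\<forall>d. (\<Sum>a\<in>A'. sm (d a) (y a)) = 0 \<longrightarrow> (\<forall>a\<in>A'. d a \<in> P)"
    proof (intro allI impI)
      fix d assume d: "(\<Sum>a\<in>A'. sm (d a) (y a)) = 0"
      define k where "k = (\<Sum>a\<in>A'. d a * (C a t * b))"
      define e where "e a = (if a = a0 then - k else d a)" for a
      have "(\<Sum>a\<in>A'. sm (d a) (y a)) = (\<Sum>a\<in>A'. sm (d a) (x a)) - sm k (x a0)"
        unfolding y_def k_def
        by (simp add: scale_right_diff_distrib sum_subtractf scale_sum_left)
      moreover have "(\<Sum>a\<in>A. sm (e a) (x a)) = sm (e a0) (x a0) + (\<Sum>a\<in>A'. sm (e a) (x a))"
        unfolding A'_def using a0(1) insert.prems(2) by (simp add: sum.remove)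
      moreover have "(\<Sum>a\<in>A'. sm (e a) (x a)) = (\<Sum>a\<in>A'. sm (d a) (x a))"
        unfolding e_def A'_def by (intro sum.cong) auto
      ultimately have "(\<Sum>a\<in>A. sm (e a) (x a)) = 0" using d by (simp add: e_def)
      then have "\<forall>a\<in>A. e a \<in> P" using insert.prems(3) by blast
      then show "\<forall>a\<in>A'. d a \<in> P" unfolding A'_def e_def by (metis DiffD1 DiffD2 singletonI)
    qed
    have "card A' \<le> card T"
      using insert.IH[of A' y] insert.prems fA' span ind by blast
    moreover have "card A = Suc (card A')"
      unfolding A'_def using a0(1) insert.prems(2) by (simp add: card_Suc_Diff1 card_gt_0_iff Suc_pred' del: card_Diff_insert)
    ultimately show ?thesis using insert.hyps by simp
  qed
qed


lemma ws_scale: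
  assumes md: "module (ract act)" and v: "v \<in> wspace act P"
  shows "ract act r v \<in> wspace act P"
proof -
  interpret module "ract act" by (rule md)
  show ?thesis using v unfolding wspace_def by (auto simp: scale_left_commute) (metis mult.commute scale_scale scale_zero_right)
qed

lemma ws_diff:
  assumes md: "module (ract act)" and "v \<in> wspace act P" "w \<in> wspace act P"
  shows "v - w \<in> wspace act P"
proof -
  interpret module "ract act" by (rule md)
  show ?thesis using assms(2,3) unfolding wspace_def by (auto simp: scale_right_diff_distrib)
qed

lemma ws_sum:
  assumes md: "module (ract act)" and "\<forall>i\<in>A. f i \<in> wspace act P"
  shows "sum f A \<in> wspace act P"
proof -
  interpret module "ract act" by (rule md)
  show ?thesis using assms(2) unfolding wspace_def by (auto simp: scale_sum_right)
qed

lemma ws_unit: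
  assumes md: "module (ract act)" and P: "is_max_ideal P" and a: "a \<notin> P"
    and v: "v \<in> wspace act P" and z: "ract act a v = 0"
  shows "v = 0"
proof -
  interpret module "ract act" by (rule md)
  obtain b where b: "b * a - 1 \<in> P" using max_inv[OF P a] by blast
  have "ract act (b * a - 1) v = 0" using v b unfolding wspace_def by blast
  moreover have "ract act (b * a) v = 0" using z by (metis scale_scale scale_zero_right)
  ultimately show ?thesis by (simp add: scale_left_diff_distrib)
qed

lemma ws_surj:
  assumes md: "module (ract act)" and P: "is_max_ideal P" and a: "a \<notin> P"
    and v: "v \<in> wspace act P"
  shows "\<exists>w\<in>wspace act P. v = ract act a w"
proof -
  interpret module "ract act" by (rule md)
  obtain b where b: "b * a - 1 \<in> P" using max_inv[OF P a] by blast
  have "ract act (b * a - 1) v = 0" using v b unfolding wspace_def by blast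
  then have "ract act a (ract act b v) = v" by (simp add: scale_left_diff_distrib mult.commute)
  then show ?thesis using ws_scale[OF md v] by metis
qed

lemma transport:
  assumes md: "module (ract act)" and Q: "is_max_ideal Q"
    and bS: "res_basis act P (wspace act P) S"
    and bT: "res_basis act Q (wspace act Q) T"
    and add: "additive f"
    and maps: "\<forall>v\<in>wspace act P. f v \<in> wspace act Q"
    and ker: "\<forall>v\<in>wspace act P. f v = 0 \<longrightarrow> v = 0"
    and comm: "\<forall>r. \<forall>v\<in>wspace act P. f (ract act r v) = ract act (\<tau> r) (f v)"
    and inv: "\<forall>x. \<tau> (\<tau>' x) = x" and bck: "\<forall>x. \<tau>' x \<in> P \<longrightarrow> x \<in> Q"
  shows "card S \<le> card T"
proof -
  interpret module "ract act" by (rule md)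
  interpret additive f by (rule add)
  have fS: "finite S" "S \<subseteq> wspace act P" "res_indep act P S"
    using bS unfolding res_basis_def by auto
  have fT: "finite T" "T \<subseteq> wspace act Q" "wspace act Q \<subseteq> res_span act T"
    using bT unfolding res_basis_def by auto
  show ?thesis
  proof (rule exch[OF md Q fT(1) _ fS(1)])
    show "T \<subseteq> {v. \<forall>r\<in>Q. ract act r v = 0}" using fT(2) unfolding wspace_def by auto
    show "\<forall>a\<in>S. \<exists>c. f a = (\<Sum>u\<in>T. ract act (c u) u)"
      using fT(3) fS(2) maps unfolding res_span_def by blast
    show "\<forall>d. (\<Sum>a\<in>S. ract act (d a) (f a)) = 0 \<longrightarrow> (\<forall>a\<in>S. d a \<in> Q)"
    proof (intro allI impI)
      fix d assume d: "(\<Sum>a\<in>S. ract act (d a) (f a)) = 0"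
      define w where "w = (\<Sum>a\<in>S. ract act (\<tau>' (d a)) a)"
      have wV: "w \<in> wspace act P" unfolding w_def
        using fS(2) by (intro ws_sum[OF md] ballI ws_scale[OF md]) auto
      have "f w = (\<Sum>a\<in>S. f (ract act (\<tau>' (d a)) a))" unfolding w_def by (rule sum)
      also have "\<dots> = (\<Sum>a\<in>S. ract act (d a) (f a))"
        using fS(2) comm inv by (intro sum.cong) auto
      finally have "w = 0" using d ker wV by simp
      then have "\<forall>a\<in>S. \<tau>' (d a) \<in> P" using fS(3)[unfolded res_indep_def, rule_format, of "\<lambda>a. \<tau>' (d a)"] unfolding w_def by simp
      then show "\<forall>a\<in>S. d a \<in> Q" using bck by blast
    qed
  qed
qed


lemma aut_facts:
  assumes "is_ring_aut \<sigma>"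
  shows "\<sigma> (a + b) = \<sigma> a + \<sigma> b" "\<sigma> (a * b) = \<sigma> a * \<sigma> b" "\<sigma> 0 = 0" "\<sigma> 1 = 1"
    "\<sigma> (inv \<sigma> x) = x" "inv \<sigma> (\<sigma> x) = x" "inj \<sigma>" "surj \<sigma>"
proof -
  show a: "\<sigma> (a + b) = \<sigma> a + \<sigma> b" "\<sigma> (a * b) = \<sigma> a * \<sigma> b" "\<sigma> 1 = 1" "inj \<sigma>" "surj \<sigma>"
    using assms by (auto simp: is_ring_aut_def bij_def)
  have "\<sigma> (0 + 0) = \<sigma> 0 + \<sigma> 0" using assms unfolding is_ring_aut_def by blast
  then have "\<sigma> 0 = \<sigma> 0 + \<sigma> 0" by (metis add_0)
  then show "\<sigma> 0 = 0" by (metis add.right_neutral add_left_cancel)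
  show "\<sigma> (inv \<sigma> x) = x" using a by (simp add: surj_f_inv_f)
  show "inv \<sigma> (\<sigma> x) = x" using a by simp
qed

lemma aut_inv:
  assumes s: "is_ring_aut \<sigma>"
  shows "is_ring_aut (inv \<sigma>)"
proof -
  note f = aut_facts[OF s]
  have "bij (inv \<sigma>)" using s by (simp add: is_ring_aut_def bij_imp_bij_inv)
  moreover have "inv \<sigma> (a + b) = inv \<sigma> a + inv \<sigma> b" for a b
  proof -
    have "inv \<sigma> (a + b) = inv \<sigma> (\<sigma> (inv \<sigma> a + inv \<sigma> b))" by (simp only: f(1) f(5))
    then show ?thesis by (simp only: f(6))
  qed
  moreover have "inv \<sigma> (a * b) = inv \<sigma> a * inv \<sigma> b" for a b
  proof -
    have "inv \<sigma> (a * b) = inv \<sigma> (\<sigma> (inv \<sigma> a * inv \<sigma> b))" by (simp only: f(2) f(5))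
    then show ?thesis by (simp only: f(6))
  qed
  moreover have "inv \<sigma> 1 = 1" using f(6)[of 1] f(4) by simp
  ultimately show ?thesis by (simp add: is_ring_aut_def)
qed

lemma aut_ideal:
  assumes s: "is_ring_aut \<sigma>" and I: "is_ideal I"
  shows "is_ideal (\<sigma> ` I)"
proof -
  note f = aut_facts[OF s]
  show ?thesis unfolding is_ideal_def
  proof (intro conjI ballI allI)
    show "0 \<in> \<sigma> ` I" using ideal_zero[OF I] f(3) by force
    fix a b assume "a \<in> \<sigma> ` I" "b \<in> \<sigma> ` I"
    then obtain x y where "x \<in> I" "y \<in> I" "a = \<sigma> x" "b = \<sigma> y" by blast
    then show "a + b \<in> \<sigma> ` I" using ideal_add[OF I] f(1) by (metis image_eqI)
  next
    fix r a assume "a \<in> \<sigma> ` I"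
    then obtain x where x: "x \<in> I" "a = \<sigma> x" by blast
    have "r * a = \<sigma> (inv \<sigma> r * x)" using x f(2) f(5) by simp
    then show "r * a \<in> \<sigma> ` I" using ideal_mult[OF I x(1)] by blast
  qed
qed

lemma aut_max:
  assumes s: "is_ring_aut \<sigma>" and P: "is_max_ideal P"
  shows "is_max_ideal (\<sigma> ` P)"
proof -
  note f = aut_facts[OF s]
  have iP: "is_ideal P" and nU: "P \<noteq> UNIV" using P by (auto simp: is_max_ideal_def)
  have "1 \<notin> \<sigma> ` P"
  proof
    assume "1 \<in> \<sigma> ` P"
    then obtain p where "p \<in> P" "\<sigma> p = 1" by (metis imageE)
    then have "1 \<in> P" using f(4) f(7) by (metis injD)
    then show False using ideal_one[OF iP nU] by blast
  qed
  then have nU': "\<sigma> ` P \<noteq> UNIV" by blast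
  have "I = \<sigma> ` P \<or> I = UNIV" if I: "is_ideal I" "\<sigma> ` P \<subseteq> I" for I
  proof -
    have "is_ideal (inv \<sigma> ` I)" by (rule aut_ideal[OF aut_inv[OF s] I(1)])
    moreover have "P \<subseteq> inv \<sigma> ` I"
    proof
      fix p assume "p \<in> P"
      then have "\<sigma> p \<in> I" using I(2) by blast
      then show "p \<in> inv \<sigma> ` I" using f(6)[of p] by (metis image_eqI)
    qed
    ultimately have "inv \<sigma> ` I = P \<or> inv \<sigma> ` I = UNIV" using P by (simp add: is_max_ideal_def)
    moreover have "\<sigma> ` (inv \<sigma> ` I) = I" using f(5) by (simp add: image_image)
    moreover have "\<sigma> ` UNIV = UNIV" using f(8) by simp
    ultimately show ?thesis by force
  qed
  then show ?thesis using aut_ideal[OF s iP] nU' by (simp add: is_max_ideal_def)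
qed

lemma max_prime:
  assumes P: "is_max_ideal P" and "a * b \<in> P" and "a \<notin> P"
  shows "b \<in> P"
proof -
  have iP: "is_ideal P" using P by (simp add: is_max_ideal_def)
  obtain c where c: "c * a - 1 \<in> P" using max_inv[OF P assms(3)] by blast
  have "b = c * (a * b) - b * (c * a - 1)" by (simp add: algebra_simps)
  then show ?thesis using ideal_diff[OF iP ideal_mult[OF iP assms(2)] ideal_mult[OF iP c]] by metis
qed

lemma max_is_prime: "is_max_ideal P \<Longrightarrow> is_prime_ideal P"
  unfolding is_prime_ideal_def using max_prime by (auto simp: is_max_ideal_def)

lemma spow_simps:
  "spow \<sigma> 0 = id" "spow \<sigma> 1 = \<sigma>" "spow \<sigma> (-1) = inv \<sigma>"
  by (auto simp: spow_def)

lemma tmono_mult: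
  assumes "spow \<sigma> k 0 = 0"
  shows "skew_mult \<sigma> (tmono a k) (tmono b l) = tmono (a * spow \<sigma> k b) (k + l)"
proof (rule ext)
  fix n
  show "skew_mult \<sigma> (tmono a k) (tmono b l) n = tmono (a * spow \<sigma> k b) (k + l) n"
  proof (cases "a = 0")
    case True
    then show ?thesis by (simp add: skew_mult_def tmono_def)
  next
    case False
    then have "{k'. tmono a k k' \<noteq> 0} = {k}" by (auto simp: tmono_def)
    then show ?thesis using assms by (auto simp: skew_mult_def tmono_def)
  qed
qed

lemma zero_Iseq:
  assumes s: "is_ring_aut \<sigma>" and H: "is_ideal H" and J: "is_ideal J"
  shows "0 \<in> Iseq \<sigma> H J n"
proof -
  have "0 \<in> Ipos \<sigma> J k" for k
    by (cases k) (auto simp: ideal_zero[OF J] ideal_prod_def intro: exI[of _ 0])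
  moreover have "0 \<in> Ineg \<sigma> H k" for k
  proof (cases k)
    case (Suc k')
    have "inv \<sigma> 0 = 0" using aut_facts(3)[OF aut_inv[OF s]] .
    then have "0 \<in> inv \<sigma> ` H" using ideal_zero[OF H] by (metis image_eqI)
    then show ?thesis using Suc by (auto simp: ideal_prod_def intro: exI[of _ 0])
  qed simp
  ultimately show ?thesis by (simp add: Iseq_def)
qed

lemma tmono_BR:
  assumes s: "is_ring_aut \<sigma>" and H: "is_ideal H" and J: "is_ideal J" and a: "a \<in> Iseq \<sigma> H J k"
  shows "tmono a k \<in> BR_alg \<sigma> H J"
proof -
  have "{n. tmono a k n \<noteq> 0} \<subseteq> {k}" by (auto simp: tmono_def)
  then have "finite {n. tmono a k n \<noteq> 0}" using finite_subset by blast
  then show ?thesis using a zero_Iseq[OF s H J] by (auto simp: BR_alg_def tmono_def)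
qed

lemma Iseq_vals: "Iseq \<sigma> H J 0 = UNIV" "Iseq \<sigma> H J 1 = J" "Iseq \<sigma> H J (-1) = inv \<sigma> ` H"
  by (auto simp: Iseq_def)


theorem proposition3p1:
  fixes \<sigma> :: "'r::idom \<Rightarrow> 'r"
    and H J :: "'r set"
    and act :: "(int \<Rightarrow> 'r) \<Rightarrow> 'm::ab_group_add \<Rightarrow> 'm"
    and m :: "'r set"
  assumes aut: "is_ring_aut \<sigma>"
    and H: "is_ideal H" and J: "is_ideal J"
    and nonzero: "\<forall>n. Iseq \<sigma> H J n \<noteq> {0}"
    and module: "is_B_module \<sigma> H J act"
    and weight: "is_weight_module act"
    and m: "is_max_ideal m"
    and notS: "\<sigma> ` m \<notin> SB H J"
  shows "(\<forall>j\<in>J - \<sigma> ` m.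
            act (tmono j 1) ` wspace act m \<subseteq> wspace act (\<sigma> ` m) \<and>
            inj_on (act (tmono j 1)) (wspace act m)) \<and>
         (\<forall>h\<in>H - \<sigma> ` m.
            act (tmono (inv \<sigma> h) (-1)) ` wspace act (\<sigma> ` m) \<subseteq> wspace act m \<and>
            inj_on (act (tmono (inv \<sigma> h) (-1))) (wspace act (\<sigma> ` m))) \<and>
         res_dim act m (wspace act m) = res_dim act (\<sigma> ` m) (wspace act (\<sigma> ` m))"
proof -
  note f = aut_facts[OF aut]
  have sinv: "is_ring_aut (inv \<sigma>)" by (rule aut_inv[OF aut])
  note g = aut_facts[OF sinv]
  have sm: "is_max_ideal (\<sigma> ` m)" by (rule aut_max[OF aut m])
  have im: "is_ideal m" using m by (simp add: is_max_ideal_def)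
  have ism: "is_ideal (\<sigma> ` m)" using sm by (simp add: is_max_ideal_def)
  define B where "B = BR_alg \<sigma> H J"
  have addf: "\<And>f g v. f \<in> B \<Longrightarrow> g \<in> B \<Longrightarrow> act (\<lambda>n. f n + g n) v = act f v + act g v"
    and addv: "\<And>f v w. f \<in> B \<Longrightarrow> act f (v + w) = act f v + act f w"
    and multf: "\<And>f g v. f \<in> B \<Longrightarrow> g \<in> B \<Longrightarrow> act (skew_mult \<sigma> f g) v = act f (act g v)"
    and one: "\<And>v. act (tmono 1 0) v = v"
    using module unfolding is_B_module_def B_def by blast+
  have T0: "tmono r 0 \<in> B" for r
    unfolding B_def by (rule tmono_BR[OF aut H J]) (simp add: Iseq_vals)
  have Tj: "tmono j 1 \<in> B" if "j \<in> J" for j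
    unfolding B_def by (rule tmono_BR[OF aut H J]) (simp add: Iseq_vals that)
  have Th: "tmono (inv \<sigma> h) (-1) \<in> B" if "h \<in> H" for h
    unfolding B_def by (rule tmono_BR[OF aut H J]) (simp add: Iseq_vals that)
  have z0: "spow \<sigma> 0 0 = 0" and z1: "spow \<sigma> 1 0 = 0" and zm1: "spow \<sigma> (-1) 0 = 0"
    by (simp_all add: spow_simps f(3) g(3))
  have md: "module (ract act)"
  proof
    fix a b :: 'r and x y :: 'm
    show "ract act a (x + y) = ract act a x + ract act a y"
      unfolding ract_def using addv[OF T0] .
    have "(\<lambda>n. tmono a 0 n + tmono b 0 n) = tmono (a + b) 0" by (auto simp: tmono_def)
    then show "ract act (a + b) x = ract act a x + ract act b x"
      unfolding ract_def using addf[OF T0 T0, of a b x] by simp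
    show "ract act a (ract act b x) = ract act (a * b) x"
      unfolding ract_def using multf[OF T0 T0, of a b x] tmono_mult[OF z0, of a b 0]
      by (simp add: spow_simps)
    show "ract act 1 x = x" unfolding ract_def by (rule one)
  qed
  have additive: "additive (act f)" if "f \<in> B" for f
    using addv[OF that] by (simp add: additive_def)
  have act0: "act f 0 = 0" if "f \<in> B" for f
    using additive.zero[OF additive[OF that]] .
  have cj: "act (tmono j 1) (ract act r v) = ract act (\<sigma> r) (act (tmono j 1) v)" if "j \<in> J" for j r v
  proof -
    have "act (tmono j 1) (ract act r v) = act (tmono (j * \<sigma> r) 1) v"
      unfolding ract_def using multf[OF Tj[OF that] T0, of r v] tmono_mult[OF z1, of j r 0]
      by (simp add: spow_simps)
    moreover have "ract act (\<sigma> r) (act (tmono j 1) v) = act (tmono (\<sigma> r * j) 1) v"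
      unfolding ract_def using multf[OF T0 Tj[OF that], of "\<sigma> r" v] tmono_mult[OF z0, of "\<sigma> r" j 1]
      by (simp add: spow_simps)
    ultimately show ?thesis by (simp add: mult.commute)
  qed
  have ch: "act (tmono (inv \<sigma> h) (-1)) (ract act r v) = ract act (inv \<sigma> r) (act (tmono (inv \<sigma> h) (-1)) v)"
    if "h \<in> H" for h r v
  proof -
    have "act (tmono (inv \<sigma> h) (-1)) (ract act r v) = act (tmono (inv \<sigma> h * inv \<sigma> r) (-1)) v"
      unfolding ract_def using multf[OF Th[OF that] T0, of r v] tmono_mult[OF zm1, of "inv \<sigma> h" r 0]
      by (simp add: spow_simps)
    moreover have "ract act (inv \<sigma> r) (act (tmono (inv \<sigma> h) (-1)) v) = act (tmono (inv \<sigma> r * inv \<sigma> h) (-1)) v"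
      unfolding ract_def using multf[OF T0 Th[OF that], of "inv \<sigma> r" v] tmono_mult[OF z0, of "inv \<sigma> r" "inv \<sigma> h" "-1"]
      by (simp add: spow_simps)
    ultimately show ?thesis by (simp add: mult.commute)
  qed
  have comp1: "act (tmono (inv \<sigma> h) (-1)) (act (tmono j 1) v) = ract act (inv \<sigma> (h * j)) v"
    if "h \<in> H" "j \<in> J" for h j v
    unfolding ract_def using multf[OF Th[OF that(1)] Tj[OF that(2)], of v]
      tmono_mult[OF zm1, of "inv \<sigma> h" j 1] g(2)
    by (simp add: spow_simps)
  have comp2: "act (tmono j 1) (act (tmono (inv \<sigma> h) (-1)) v) = ract act (j * h) v"
    if "h \<in> H" "j \<in> J" for h j v
    unfolding ract_def using multf[OF Tj[OF that(2)] Th[OF that(1)], of v]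
      tmono_mult[OF z1, of j "inv \<sigma> h" "-1"] f(5)
    by (simp add: spow_simps)
  have backs: "x \<in> \<sigma> ` m" if "inv \<sigma> x \<in> m" for x
    using that f(5)[of x] by (metis image_eqI)
  have backs2: "x \<in> m" if "\<sigma> x \<in> \<sigma> ` m" for x
    using that f(7) by (metis inj_image_mem_iff)
  obtain h0 j0 where h0: "h0 \<in> H" "h0 \<notin> \<sigma> ` m" and j0: "j0 \<in> J" "j0 \<notin> \<sigma> ` m"
  proof -
    have "\<not> ideal_prod H J \<subseteq> \<sigma> ` m" using notS max_is_prime[OF sm] by (simp add: SB_def)
    then obtain z where "z \<in> ideal_prod H J" "z \<notin> \<sigma> ` m" by blast
    then obtain k a b where z: "z = (\<Sum>i<(k::nat). a i * b i)" "\<forall>i<k. a i \<in> H \<and> b i \<in> J"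
      unfolding ideal_prod_def by blast
    have "\<exists>i<k. a i * b i \<notin> \<sigma> ` m"
    proof (rule ccontr)
      assume "\<not> ?thesis"
      then have "z \<in> \<sigma> ` m" unfolding z(1) by (intro ideal_sum[OF ism]) auto
      then show False using \<open>z \<notin> \<sigma> ` m\<close> by blast
    qed
    then obtain i where i: "i < k" "a i * b i \<notin> \<sigma> ` m" by blast
    have "a i \<notin> \<sigma> ` m" using i(2) ideal_mult2[OF ism] by blast
    moreover have "b i \<notin> \<sigma> ` m" using i(2) ideal_mult[OF ism] by blast
    ultimately show ?thesis using that z(2) i(1) by blast
  qed
  have prodn: "h * j \<notin> \<sigma> ` m" if "h \<notin> \<sigma> ` m" "j \<notin> \<sigma> ` m" for h j
    using max_prime[OF sm] that by blast
  have mapj: "act (tmono j 1) v \<in> wspace act (\<sigma> ` m)" if "j \<in> J" "v \<in> wspace act m" for j v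
  proof -
    have "ract act r (act (tmono j 1) v) = 0" if r: "r \<in> \<sigma> ` m" for r
    proof -
      obtain a where a: "a \<in> m" "r = \<sigma> a" using r by blast
      have "ract act a v = 0" using a(1) \<open>v \<in> wspace act m\<close> by (simp add: wspace_def)
      then show ?thesis using cj[OF \<open>j \<in> J\<close>, of a v] a(2) act0[OF Tj[OF \<open>j \<in> J\<close>]] by simp
    qed
    then show ?thesis by (simp add: wspace_def)
  qed
  have maph: "act (tmono (inv \<sigma> h) (-1)) v \<in> wspace act m" if "h \<in> H" "v \<in> wspace act (\<sigma> ` m)" for h v
  proof -
    have "ract act r (act (tmono (inv \<sigma> h) (-1)) v) = 0" if r: "r \<in> m" for r
    proof -
      have "ract act (\<sigma> r) v = 0" using r \<open>v \<in> wspace act (\<sigma> ` m)\<close> by (simp add: wspace_def)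
      then show ?thesis using ch[OF \<open>h \<in> H\<close>, of "\<sigma> r" v] f(6) act0[OF Th[OF \<open>h \<in> H\<close>]] by simp
    qed
    then show ?thesis by (simp add: wspace_def)
  qed
  have kerj: "v = 0" if "j \<in> J" "j \<notin> \<sigma> ` m" "v \<in> wspace act m" "act (tmono j 1) v = 0" for j v
  proof -
    have "ract act (inv \<sigma> (h0 * j)) v = 0" using comp1[OF h0(1) that(1), of v] that(4) act0[OF Th[OF h0(1)]] by simp
    moreover have "inv \<sigma> (h0 * j) \<notin> m" using backs prodn[OF h0(2) that(2)] by blast
    ultimately show ?thesis using ws_unit[OF md m _ that(3)] by blast
  qed
  have kerh: "v = 0" if "h \<in> H" "h \<notin> \<sigma> ` m" "v \<in> wspace act (\<sigma> ` m)" "act (tmono (inv \<sigma> h) (-1)) v = 0" for h v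
  proof -
    have "ract act (j0 * h) v = 0" using comp2[OF that(1) j0(1), of v] that(4) act0[OF Tj[OF j0(1)]] by simp
    moreover have "j0 * h \<notin> \<sigma> ` m" using prodn[OF j0(2) that(2)] by (simp add: mult.commute)
    ultimately show ?thesis using ws_unit[OF md sm _ that(3)] by blast
  qed
  have injj: "inj_on (act (tmono j 1)) (wspace act m)" if "j \<in> J" "j \<notin> \<sigma> ` m" for j
  proof (rule inj_onI)
    fix v w assume vw: "v \<in> wspace act m" "w \<in> wspace act m" "act (tmono j 1) v = act (tmono j 1) w"
    have "act (tmono j 1) (v - w) = 0" using additive.diff[OF additive[OF Tj[OF that(1)]]] vw(3) by simp
    then have "v - w = 0" using kerj[OF that ws_diff[OF md vw(1,2)]] by blast
    then show "v = w" by simp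
  qed
  have injh: "inj_on (act (tmono (inv \<sigma> h) (-1))) (wspace act (\<sigma> ` m))" if "h \<in> H" "h \<notin> \<sigma> ` m" for h
  proof (rule inj_onI)
    fix v w assume vw: "v \<in> wspace act (\<sigma> ` m)" "w \<in> wspace act (\<sigma> ` m)"
      "act (tmono (inv \<sigma> h) (-1)) v = act (tmono (inv \<sigma> h) (-1)) w"
    have "act (tmono (inv \<sigma> h) (-1)) (v - w) = 0" using additive.diff[OF additive[OF Th[OF that(1)]]] vw(3) by simp
    then have "v - w = 0" using kerh[OF that ws_diff[OF md vw(1,2)]] by blast
    then show "v = w" by simp
  qed
  have wm: "\<forall>P. is_max_ideal P \<longrightarrow> res_fin_dim act P (wspace act P)"
    using weight by (simp add: is_weight_module_def)
  define S0 where "S0 = (SOME S. res_basis act m (wspace act m) S)"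
  define T0 where "T0 = (SOME S. res_basis act (\<sigma> ` m) (wspace act (\<sigma> ` m)) S)"
  have bS: "res_basis act m (wspace act m) S0"
  proof -
    have "res_fin_dim act m (wspace act m)" using wm m by blast
    then obtain S where "res_basis act m (wspace act m) S" unfolding res_fin_dim_def by blast
    then show ?thesis unfolding S0_def by (rule someI)
  qed
  have bT: "res_basis act (\<sigma> ` m) (wspace act (\<sigma> ` m)) T0"
  proof -
    have "res_fin_dim act (\<sigma> ` m) (wspace act (\<sigma> ` m))" using wm sm by blast
    then obtain S where "res_basis act (\<sigma> ` m) (wspace act (\<sigma> ` m)) S" unfolding res_fin_dim_def by blast
    then show ?thesis unfolding T0_def by (rule someI)
  qed
  have le1: "card S0 \<le> card T0"
    by (rule transport[OF md sm bS bT additive[OF Tj[OF j0(1)]], where \<tau> = \<sigma> and \<tau>' = "inv \<sigma>"])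
      (use mapj[OF j0(1)] in blast, use kerj[OF j0] in blast, use cj[OF j0(1)] in blast,
       use f(5) in blast, use backs in blast)
  have le2: "card T0 \<le> card S0"
    by (rule transport[OF md m bT bS additive[OF Th[OF h0(1)]], where \<tau> = "inv \<sigma>" and \<tau>' = \<sigma>])
      (use maph[OF h0(1)] in blast, use kerh[OF h0] in blast, use ch[OF h0(1)] in blast,
       use f(6) in blast, use backs2 in blast)
  have "res_dim act m (wspace act m) = res_dim act (\<sigma> ` m) (wspace act (\<sigma> ` m))"
    unfolding res_dim_def S0_def[symmetric] T0_def[symmetric] using le1 le2 by simp
  then show ?thesis using mapj injj maph injh by blast
qed

end
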